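(* There is an absolute constant $K$ such that for every integer $c \ge 0$, the minimal Fibonacci-DFAO generating the sequence $(t(i+c))_{i \ge 0}$ has at most $K(c+1)$ states, where $t(i)$ is the number of $1$s in the canonical Fibonacci (Zeckendorf) representation of $i$, taken modulo $2$.
   Context: The canonical Fibonacci representation of $i \ge 0$ is the unique binary word $x$ without leading zeros and with no factor $11$ such that $i = [x] := \sum_{j=1}^{\ell} x_j F_{\ell-j+2}$ where $x = x_1\cdots x_\ell$ and $F_0=0,F_1=1,F_k=F_{k-1}+F_{k-2}$. A Fibonacci-DFAO reads valid Fibonacci representations (no factor $11$, leading zeros allowed, output independent of leading zeros) most significant digit first, and generates $(s(i))$ if its output on every representation of $i$ is $s(i)$. *)

theory Defs
  imports Main "HOL-Number_Theory.Fib"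
begin

text \<open>Binary words are bool lists (True = digit 1), most significant digit first.
  Value: [x_1 ... x_l] = sum_j x_j F_(l-j+2).\<close>
fun fval :: "bool list \<Rightarrow> nat" where
  "fval [] = 0"
| "fval (b # xs) = (if b then fib (length xs + 2) else 0) + fval xs"

definition fvalid :: "bool list \<Rightarrow> bool" where
  "fvalid w \<longleftrightarrow> \<not> (\<exists>j. Suc j < length w \<and> w ! j \<and> w ! Suc j)"

definition zeck :: "nat \<Rightarrow> bool list" where
  "zeck i = (THE w. fvalid w \<and> (w = [] \<or> hd w) \<and> fval w = i)"

definition fib_thue :: "nat \<Rightarrow> nat" where
  "fib_thue i = length (filter id (zeck i)) mod 2"

text \<open>A DFAO over {0,1} with states {0..<n}, initial state q0, transition delta,
  output function out.  It is well formed if q0 and all transitions stay in {0..<n}.\<close>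
definition dfao_wf :: "nat \<Rightarrow> (nat \<Rightarrow> bool \<Rightarrow> nat) \<Rightarrow> nat \<Rightarrow> bool" where
  "dfao_wf n delta q0 \<longleftrightarrow> q0 < n \<and> (\<forall>q<n. \<forall>b. delta q b < n)"

definition dfao_run :: "(nat \<Rightarrow> bool \<Rightarrow> nat) \<Rightarrow> nat \<Rightarrow> bool list \<Rightarrow> nat" where
  "dfao_run delta q0 w = foldl delta q0 w"

definition fib_dfao_generates ::
  "nat \<Rightarrow> (nat \<Rightarrow> bool \<Rightarrow> nat) \<Rightarrow> nat \<Rightarrow> (nat \<Rightarrow> 'o) \<Rightarrow> (nat \<Rightarrow> 'o) \<Rightarrow> bool" where
  "fib_dfao_generates n delta q0 out s \<longleftrightarrow>
     dfao_wf n delta q0 \<and> (\<forall>w. fvalid w \<longrightarrow> out (dfao_run delta q0 w) = s (fval w))"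

end

theory Submission
  imports Defs
begin

abbreviation ones :: "bool list \<Rightarrow> nat" where "ones w \<equiv> length (filter id w)"

lemma fvalid_Nil[simp]: "fvalid []"
  by (simp add: fvalid_def)

lemma fvalid_Cons: "fvalid (x#xs) \<longleftrightarrow> fvalid xs \<and> \<not>(x \<and> xs \<noteq> [] \<and> hd xs)"
proof
  assume a: "fvalid (x#xs)"
  have "fvalid xs" unfolding fvalid_def
  proof
    assume "\<exists>j. Suc j < length xs \<and> xs ! j \<and> xs ! Suc j"
    then obtain j where "Suc j < length xs \<and> xs ! j \<and> xs ! Suc j" by blast
    then have "Suc (Suc j) < length (x#xs) \<and> (x#xs) ! Suc j \<and> (x#xs) ! Suc (Suc j)" by simp
    then show False using a unfolding fvalid_def by blast
  qed
  moreover have "\<not>(x \<and> xs \<noteq> [] \<and> hd xs)"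
  proof
    assume "x \<and> xs \<noteq> [] \<and> hd xs"
    then have "Suc 0 < length (x#xs) \<and> (x#xs) ! 0 \<and> (x#xs) ! Suc 0" by (cases xs) auto
    then show False using a unfolding fvalid_def by blast
  qed
  ultimately show "fvalid xs \<and> \<not>(x \<and> xs \<noteq> [] \<and> hd xs)" by blast
next
  assume a: "fvalid xs \<and> \<not>(x \<and> xs \<noteq> [] \<and> hd xs)"
  show "fvalid (x#xs)" unfolding fvalid_def
  proof
    assume "\<exists>j. Suc j < length (x#xs) \<and> (x#xs) ! j \<and> (x#xs) ! Suc j"
    then obtain j where j: "Suc j < length (x#xs) \<and> (x#xs) ! j \<and> (x#xs) ! Suc j" by blast
    show False
    proof (cases j)
      case 0
      then show False using a j by (cases xs) auto
    next
      case (Suc i)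
      then have "Suc i < length xs \<and> xs ! i \<and> xs ! Suc i" using j by simp
      then show False using a unfolding fvalid_def by blast
    qed
  qed
qed

lemma fvalid_append: "fvalid (xs@ys) \<longleftrightarrow> fvalid xs \<and> fvalid ys \<and> \<not>(xs\<noteq>[] \<and> ys\<noteq>[] \<and> last xs \<and> hd ys)"
proof (induction xs)
  case Nil then show ?case by simp
next
  case (Cons x xs)
  then show ?case by (cases xs) (auto simp: fvalid_Cons)
qed

lemma fvalid_replicate: "fvalid (replicate n False @ w) \<longleftrightarrow> fvalid w"
  by (induction n) (auto simp: fvalid_Cons)

lemma fval_replicate: "fval (replicate n False @ w) = fval w"
  by (induction n) auto

lemma fval_replicate0[simp]: "fval (replicate n False) = 0"
  using fval_replicate[of n "[]"] by simp

lemma fval_append: "fval (xs@ys) = fval (xs @ replicate (length ys) False) + fval ys"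
  by (induction xs) auto

lemma fib_ss: "fib (Suc (Suc n)) = fib (Suc n) + fib n" by simp

lemma fval_bound: "fvalid w \<Longrightarrow> fval w < fib (length w + 2)"
proof (induction w rule: induct_list012)
  case 1 then show ?case by simp
next
  case (2 x) then show ?case by (cases x) (auto simp: numeral_eq_Suc)
next
  case (3 x y zs)
  have v: "fvalid (y#zs)" "fvalid zs" "\<not>(x \<and> y)" using 3(3) by (auto simp: fvalid_Cons)
  have a: "fval zs < fib (length zs + 2)" using 3(1) v by blast
  have b: "fval (y#zs) < fib (length zs + 3)" using 3(2) v by (simp add: numeral_eq_Suc)
  have f4: "fib (length zs + 4) = fib (length zs + 3) + fib (length zs + 2)"
    by (simp add: numeral_eq_Suc)
  show ?case
  proof (cases x)
    case True
    then have "\<not> y" using v by blast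
    then show ?thesis using True a f4 by (simp add: numeral_eq_Suc)
  next
    case False
    then show ?thesis using b f4 by (simp add: numeral_eq_Suc)
  qed
qed

lemma fval_bound0: "fvalid w \<Longrightarrow> (w = [] \<or> \<not> hd w) \<Longrightarrow> fval w < fib (length w + 1)"
proof (cases w)
  case Nil then show ?thesis by simp
next
  case (Cons a w')
  assume "fvalid w" "w = [] \<or> \<not> hd w"
  then have "\<not> a" "fvalid w'" using Cons by (auto simp: fvalid_Cons)
  then show ?thesis using Cons fval_bound[of w'] by simp
qed

lemma fval_lower: "fib (length w + 2) \<le> fval (True # w)"
  by simp

lemma exists_rep: "X < fib (n+2) \<Longrightarrow> \<exists>w. fvalid w \<and> length w = n \<and> fval w = X"
proof (induction n arbitrary: X rule: less_induct)
  case (less n)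
  show ?case
  proof (cases n)
    case 0 then show ?thesis using less.prems by (intro exI[of _ "[]"]) simp
  next
    case (Suc k)
    show ?thesis
    proof (cases k)
      case 0
      then have "X < 2" using less.prems Suc by (simp add: numeral_eq_Suc)
      then have "X = 0 \<or> X = 1" by auto
      then show ?thesis
      proof
        assume "X = 0" then show ?thesis using Suc 0 by (intro exI[of _ "[False]"]) (simp add: fvalid_Cons)
      next
        assume "X = 1" then show ?thesis using Suc 0 by (intro exI[of _ "[True]"]) (simp add: fvalid_Cons)
      qed
    next
      case (Suc j)
      have f: "fib (n+2) = fib (j+3) + fib (j+2)" using Suc \<open>n = Suc k\<close> by (simp add: numeral_eq_Suc)
      show ?thesis
      proof (cases "X < fib (j+3)")
        case True
        then obtain w where w: "fvalid w" "length w = Suc j" "fval w = X"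
          using less.IH[of "Suc j" X] Suc \<open>n = Suc k\<close> by (auto simp: numeral_eq_Suc)
        then show ?thesis using Suc \<open>n = Suc k\<close>
          by (intro exI[of _ "False # w"]) (simp add: fvalid_Cons)
      next
        case False
        then have "X - fib (j+3) < fib (j+2)" using f less.prems by linarith
        then obtain w where w: "fvalid w" "length w = j" "fval w = X - fib (j+3)"
          using less.IH[of j "X - fib (j+3)"] Suc \<open>n = Suc k\<close> by auto
        then show ?thesis using Suc \<open>n = Suc k\<close> False
          by (intro exI[of _ "True # False # w"]) (simp add: fvalid_Cons numeral_eq_Suc)
      qed
    qed
  qed
qed

lemma exists_rep0: "X < fib (n+1) \<Longrightarrow> \<exists>w. fvalid w \<and> length w = n \<and> fval w = X \<and> (w = [] \<or> \<not> hd w)"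
proof (cases n)
  case 0
  assume "X < fib (n+1)"
  then show ?thesis using 0 by (intro exI[of _ "[]"]) simp
next
  case (Suc k)
  assume "X < fib (n+1)"
  then obtain w where "fvalid w" "length w = k" "fval w = X" using exists_rep[of X k] Suc by auto
  then show ?thesis using Suc by (intro exI[of _ "False # w"]) (simp add: fvalid_Cons)
qed

lemma uniq_same_len: "fvalid u \<Longrightarrow> fvalid v \<Longrightarrow> length u = length v \<Longrightarrow> fval u = fval v \<Longrightarrow> u = v"
proof (induction u arbitrary: v)
  case Nil then show ?case by simp
next
  case (Cons a u)
  obtain b v' where v: "v = b # v'" using Cons.prems(3) by (cases v) auto
  have vu: "fvalid u" "fvalid v'" using Cons.prems v by (auto simp: fvalid_Cons)
  have l: "length u = length v'" using Cons.prems v by simp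
  have bu: "fval u < fib (length u + 2)" "fval v' < fib (length v' + 2)" using vu fval_bound by auto
  show ?case
  proof (cases "a = b")
    case True
    then have "fval u = fval v'" using Cons.prems v l by (cases b) simp_all
    then show ?thesis using Cons.IH vu l True v by simp
  next
    case False
    then show ?thesis using Cons.prems v bu l by (cases a) auto
  qed
qed

lemma prefix_mono: "fvalid (a@x) \<Longrightarrow> fvalid (b@y) \<Longrightarrow> length a = length b \<Longrightarrow> length x = length y
   \<Longrightarrow> fval a < fval b \<Longrightarrow> fval (a@x) < fval (b@y)"
proof (induction a arbitrary: b)
  case Nil then show ?case by simp
next
  case (Cons c a)
  obtain d b' where b: "b = d # b'" using Cons.prems(3) by (cases b) auto
  have va: "fvalid (a@x)" "fvalid (b'@y)" using Cons.prems b by (auto simp: fvalid_Cons)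
  have vb: "fvalid b'" using va fvalid_append by blast
  have l: "length a = length b'" using Cons.prems b by simp
  show ?case
  proof (cases "c = d")
    case True
    then have "fval a < fval b'" using Cons.prems b by (cases c) auto
    then show ?thesis using Cons.IH[OF va l Cons.prems(4)] True b l Cons.prems(4) by (cases c) auto
  next
    case False
    show ?thesis
    proof (cases c)
      case True
      then have "\<not> d" using False by simp
      then show ?thesis using Cons.prems b True fval_bound[OF vb] l by simp
    next
      case cF: False
      then have "d" using False by simp
      then show ?thesis using cF b fval_bound[OF va(1)] l Cons.prems(4) by simp
    qed
  qed
qed

lemma split_lz: "\<exists>k. w = replicate k False @ dropWhile Not w"
proof (induction w)
  case Nil then show ?case by simp
next
  case (Cons x w)
  then obtain k where k: "w = replicate k False @ dropWhile Not w" by blast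
  show ?case
  proof (cases x)
    case True then show ?thesis by (intro exI[of _ 0]) simp
  next
    case False then show ?thesis using k by (intro exI[of _ "Suc k"]) simp
  qed
qed

lemma uniq_nlz_le: "fvalid u \<Longrightarrow> fvalid v \<Longrightarrow> (v=[] \<or> hd v) \<Longrightarrow> fval u = fval v
  \<Longrightarrow> length u \<le> length v \<Longrightarrow> u = v"
proof -
  assume a: "fvalid u" "fvalid v" "v=[] \<or> hd v" "fval u = fval v" "length u \<le> length v"
  let ?u = "replicate (length v - length u) False @ u"
  have "?u = v" using a by (intro uniq_same_len) (auto simp: fvalid_replicate fval_replicate)
  moreover have "length v - length u = 0"
  proof (rule ccontr)
    assume "length v - length u \<noteq> 0"
    then have "hd ?u = False" "?u \<noteq> []" by (cases "length v - length u"; simp)+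
    then show False using a(3) \<open>?u = v\<close> by auto
  qed
  ultimately show "u = v" by simp
qed

lemma uniq_nlz: "fvalid u \<Longrightarrow> fvalid v \<Longrightarrow> (u=[] \<or> hd u) \<Longrightarrow> (v=[] \<or> hd v) \<Longrightarrow> fval u = fval v \<Longrightarrow> u = v"
proof -
  assume a: "fvalid u" "fvalid v" "u=[] \<or> hd u" "v=[] \<or> hd v" "fval u = fval v"
  show "u = v"
  proof (cases "length u \<le> length v")
    case True then show ?thesis using a uniq_nlz_le[of u v] by blast
  next
    case False then show ?thesis using a uniq_nlz_le[of v u] by simp
  qed
qed

lemma thue_val: "fvalid w \<Longrightarrow> fib_thue (fval w) = ones w mod 2"
proof -
  assume v: "fvalid w"
  define w2 where "w2 = dropWhile Not w"
  obtain k where k: "w = replicate k False @ w2" using split_lz unfolding w2_def by blast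
  have v2: "fvalid w2" using v fvalid_replicate[of k w2] k by simp
  have f2: "fval w2 = fval w" using fval_replicate[of k w2] k by simp
  have h2: "w2 = [] \<or> hd w2" using hd_dropWhile[of Not w] unfolding w2_def by auto
  have "zeck (fval w) = w2" unfolding zeck_def
  proof (rule the_equality)
    show "fvalid w2 \<and> (w2 = [] \<or> hd w2) \<and> fval w2 = fval w" using v2 h2 f2 by blast
  next
    fix x assume "fvalid x \<and> (x = [] \<or> hd x) \<and> fval x = fval w"
    then show "x = w2" using uniq_nlz[of x w2] v2 h2 f2 by simp
  qed
  moreover have "ones w = ones w2" using k by simp
  ultimately show ?thesis by (simp add: fib_thue_def)
qed

lemma fvalid_rep0[simp]: "fvalid (replicate n False)"
  using fvalid_replicate[of n "[]"] by simp

lemma ones_append: "ones (a@b) = ones a + ones b" by simp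

definition gapv :: "bool list \<Rightarrow> nat \<Rightarrow> nat" where
  "gapv p K = (if last p then fib (K+1) else fib (K+2))"

lemma suffix_bound: "fvalid (p@z) \<Longrightarrow> p \<noteq> [] \<Longrightarrow> fval z < gapv p (length z)"
proof -
  assume a: "fvalid (p@z)" "p \<noteq> []"
  have "fvalid z" using a fvalid_append by blast
  then show ?thesis
    using a fvalid_append[of p z] fval_bound[of z] fval_bound0[of z] unfolding gapv_def by auto
qed

lemma suffix_exists: "p \<noteq> [] \<Longrightarrow> fvalid p \<Longrightarrow> X < gapv p K \<Longrightarrow> \<exists>z. fvalid (p@z) \<and> length z = K \<and> fval z = X"
proof -
  assume a: "p \<noteq> []" "fvalid p" "X < gapv p K"
  show ?thesis
  proof (cases "last p")
    case True
    then obtain z where "fvalid z \<and> length z = K \<and> fval z = X \<and> (z = [] \<or> \<not> hd z)"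
      using a exists_rep0[of X K] unfolding gapv_def by auto
    then show ?thesis using a by (intro exI[of _ z]) (auto simp: fvalid_append)
  next
    case False
    then obtain z where "fvalid z \<and> length z = K \<and> fval z = X"
      using a exists_rep[of X K] unfolding gapv_def by auto
    then show ?thesis using a False by (intro exI[of _ z]) (auto simp: fvalid_append)
  qed
qed

lemma fval_app0: "fval (p @ z) = fval (p @ replicate (length z) False) + fval z"
  by (rule fval_append)

lemma gap_lemma:
  assumes vp: "fvalid p" and vp': "fvalid p'" and l: "length p' = length p"
    and s: "fval p' = fval p + 1"
  shows "fval (p' @ replicate K False) = fval (p @ replicate K False) + gapv p K"
proof -
  have pne: "p \<noteq> []" using l s by (cases p) auto
  have gpos: "0 < gapv p K" unfolding gapv_def by (auto intro: fib_neq_0_nat)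
  obtain zm where zm: "fvalid (p@zm)" "length zm = K" "fval zm = gapv p K - 1"
    using suffix_exists[OF pne vp, of "gapv p K - 1" K] gpos by auto
  have vp'0: "fvalid (p' @ replicate K False)" using vp' by (cases K) (auto simp: fvalid_append simp del: replicate_Suc)
  have vp0: "fvalid (p @ replicate K False)" using vp by (cases K) (auto simp: fvalid_append simp del: replicate_Suc)
  have "fval (p@zm) < fval (p' @ replicate K False)"
    by (rule prefix_mono[OF zm(1) vp'0]) (use l zm s in auto)
  then have ge: "fval (p @ replicate K False) + gapv p K \<le> fval (p' @ replicate K False)"
    using fval_app0[of p zm] zm gpos by simp
  define V where "V = fval (p @ replicate K False) + gapv p K"
  have "fval (p' @ replicate K False) < fib (length (p' @ replicate K False) + 2)"
    using fval_bound[OF vp'0] .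
  then have "V < fib (length p + K + 2)" using ge l unfolding V_def by simp
  then obtain y where y: "fvalid y" "length y = length p + K" "fval y = V"
    using exists_rep by blast
  define q where "q = take (length p) y"
  define z where "z = drop (length p) y"
  have yqz: "y = q @ z" unfolding q_def z_def by simp
  have lq: "length q = length p" "length z = K" using y unfolding q_def z_def by auto
  have vq: "fvalid q" "fvalid z" using y(1) yqz fvalid_append by blast+
  have fy: "fval y = fval (q @ replicate K False) + fval z" using yqz fval_app0[of q z] lq by simp
  have le: "fval (p' @ replicate K False) \<le> V"
  proof -
    consider "fval q < fval p" | "fval q = fval p" | "fval q = fval p'" | "fval q > fval p'"
      using s by linarith
    then show ?thesis
    proof cases
      case 1
      have "fval (q@z) < fval (p @ replicate K False)"
        by (rule prefix_mono) (use y yqz vp0 lq 1 in auto)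
      then show ?thesis using y yqz unfolding V_def by simp
    next
      case 2
      then have "q = p" using uniq_same_len vq vp lq by blast
      then have "fval z < gapv p K" using suffix_bound[of p z] y yqz pne lq by simp
      then have False using fy y \<open>q = p\<close> unfolding V_def by simp
      then show ?thesis ..
    next
      case 3
      then have "q = p'" using uniq_same_len vq vp' lq l by metis
      then show ?thesis using fy y unfolding V_def by simp
    next
      case 4
      have "fval (p' @ replicate K False) < fval (q@z)"
        by (rule prefix_mono) (use y yqz vp'0 lq l 4 in auto)
      then show ?thesis using y yqz unfolding V_def by simp
    qed
  qed
  show ?thesis using ge le unfolding V_def by simp
qed

lemma gap_last:
  assumes vp: "fvalid p" and vp': "fvalid p'" and l: "length p' = length p"
    and s: "fval p' = fval p + 1" and lp: "last p"
  shows "\<not> last p'"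
proof
  assume lp': "last p'"
  have pne: "p \<noteq> []" using l s by (cases p) auto
  then have pne': "p' \<noteq> []" using l by auto
  obtain s0 where s0: "p = s0 @ [True]" using pne lp by (metis append_butlast_last_id)
  obtain s1 where s1: "p' = s1 @ [True]" using pne' lp' by (metis append_butlast_last_id)
  have l1: "length s1 = length s0" using l s0 s1 by simp
  have v0: "fvalid s0" "fvalid s1" using vp vp' s0 s1 fvalid_append by blast+
  have v0f: "fvalid (s0 @ [False])" "fvalid (s1 @ [False])" using v0 by (auto simp: fvalid_append fvalid_Cons)
  have e0: "fval p = fval (s0 @ [False]) + 1" using s0 fval_app0[of s0 "[True]"] by simp
  have e1: "fval p' = fval (s1 @ [False]) + 1" using s1 fval_app0[of s1 "[True]"] by simp
  have eq: "fval (s1 @ [False]) = fval (s0 @ [False]) + 1" using e0 e1 s by simp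
  consider "fval s1 < fval s0" | "fval s1 = fval s0" | "fval s1 > fval s0" by linarith
  then show False
  proof cases
    case 1
    have "fval (s1 @ [False]) < fval (s0 @ [False])"
      by (rule prefix_mono) (use v0f l1 1 in auto)
    then show False using eq by simp
  next
    case 2
    then have "s1 = s0" using uniq_same_len v0 l1 by blast
    then show False using eq by simp
  next
    case 3
    have "fval (s0 @ [True]) < fval (s1 @ [False])"
      by (rule prefix_mono) (use vp s0 v0f l1 3 in auto)
    then show False using eq e0 s0 by simp
  qed
qed

definition core :: "nat \<Rightarrow> nat \<Rightarrow> bool \<Rightarrow> nat \<Rightarrow> nat \<Rightarrow> nat" where
  "core b1 b2 b3 K X = (let G = (if b3 then fib (K+1) else fib (K+2)) in
     if X < G then (b1 + fib_thue X) mod 2 else (b2 + fib_thue (X - G)) mod 2)"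

lemma thue_concat:
  assumes "fvalid (p@z)"
  shows "fib_thue (fval (p@z)) = (fib_thue (fval p) + fib_thue (fval z)) mod 2"
proof -
  have "fvalid p" "fvalid z" using assms fvalid_append by blast+
  then show ?thesis using assms thue_val by (simp add: mod_add_eq)
qed

lemma core_lemma:
  assumes vp: "fvalid p" and pne: "p \<noteq> []" and vp': "fvalid p'" and l: "length p' = length p"
    and s: "fval p' = fval p + 1" and X: "X < fib (K+2) + fib K"
  shows "fib_thue (fval (p @ replicate K False) + X) = core (fib_thue (fval p)) (fib_thue (fval p')) (last p) K X"
proof -
  have G: "gapv p K = (if last p then fib (K+1) else fib (K+2))" by (simp add: gapv_def)
  show ?thesis
  proof (cases "X < gapv p K")
    case True
    obtain z where z: "fvalid (p@z)" "length z = K" "fval z = X" using suffix_exists[OF pne vp True] by blast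
    have "fval (p@z) = fval (p @ replicate K False) + X" using fval_app0[of p z] z by simp
    then show ?thesis using thue_concat[OF z(1)] True z unfolding core_def G Let_def by simp
  next
    case False
    define Y where "Y = X - gapv p K"
    have gl: "fval (p' @ replicate K False) = fval (p @ replicate K False) + gapv p K"
      using gap_lemma[OF vp vp' l s] .
    have f2: "fib (K+2) = fib (K+1) + fib K" by simp
    have mono: "fib K \<le> fib (K+1)" by (simp add: fib_mono)
    have p'ne: "p' \<noteq> []" using pne l by auto
    have Yb: "Y < gapv p' K"
    proof (cases "last p")
      case True
      then have "\<not> last p'" using gap_last[OF vp vp' l s] by blast
      then show ?thesis using True X unfolding Y_def gapv_def using f2 mono by simp
    next
      case lf: False
      then show ?thesis using X False unfolding Y_def gapv_def using f2 mono by auto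
    qed
    obtain z where z: "fvalid (p'@z)" "length z = K" "fval z = Y" using suffix_exists[OF p'ne vp' Yb] by blast
    have "fval (p'@z) = fval (p @ replicate K False) + X"
      using fval_app0[of p' z] z gl False unfolding Y_def by simp
    then show ?thesis using thue_concat[OF z(1)] False z unfolding core_def G Let_def Y_def by simp
  qed
qed

lemma choose_m: "\<exists>m\<ge>2. c \<le> fib m \<and> fib (m+2) \<le> 6*(c+1)"
proof (induction c)
  case 0
  have "fib (2+2) = 3" by (simp add: numeral_eq_Suc)
  then show ?case by (intro exI[of _ 2]) simp
next
  case (Suc c)
  then obtain m where m: "m \<ge> 2" "c \<le> fib m" "fib (m+2) \<le> 6*(c+1)" by blast
  show ?case
  proof (cases "Suc c \<le> fib m")
    case True then show ?thesis using m by (intro exI[of _ m]) auto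
  next
    case False
    then have c: "c = fib m" using m by simp
    obtain j where j: "m = j + 2" using m(1) by (metis add.commute le_Suc_ex)
    have a: "fib (j+3) = fib (j+2) + fib (j+1)" "fib (j+4) = fib (j+3) + fib (j+2)"
      "fib (j+5) = fib (j+4) + fib (j+3)" by (simp_all add: numeral_eq_Suc)
    have b: "fib (j+1) \<le> fib (j+2)" "0 < fib (j+1)" by (simp_all add: fib_mono fib_neq_0_nat)
    have "Suc c \<le> fib (m+1)" "fib (m+1+2) \<le> 6*(Suc c+1)"
      using a b c j by (simp_all add: numeral_eq_Suc)
    then show ?thesis using m by (intro exI[of _ "m+1"]) auto
  qed
qed

definition Phi :: "nat \<Rightarrow> bool list \<Rightarrow> bool list \<Rightarrow> nat" where
  "Phi c u = (\<lambda>v. if fvalid (u@v) then fib_thue (fval (u@v) + c) else 0)"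

definition Hf :: "nat \<Rightarrow> nat \<times> nat \<times> bool \<times> bool list \<Rightarrow> bool list \<Rightarrow> nat" where
  "Hf c = (\<lambda>(b1,b2,b3,r) v. if fvalid (r@v) then core b1 b2 b3 (length (r@v)) (fval (r@v) + c) else 0)"

lemma Phi_snoc: "Phi c (u@[b]) = (\<lambda>v. Phi c u (b#v))"
  unfolding Phi_def by (rule ext) simp

lemma Phi_lz: "Phi c (replicate k False @ u) = Phi c u"
  unfolding Phi_def using fvalid_replicate[of k] fval_replicate[of k] by (metis append_assoc)

lemma thue_lt2: "fib_thue x < 2" by (simp add: fib_thue_def)

lemma Phi_in:
  assumes m: "m \<ge> 2" "c \<le> fib m" and vu: "fvalid u"
  shows "Phi c u \<in> Hf c ` ({..<2} \<times> {..<2} \<times> UNIV \<times> {r. fvalid r \<and> length r = m})"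
proof -
  define w where "w = replicate (m+1) False @ u"
  have Pw: "Phi c u = Phi c w" unfolding w_def by (rule Phi_lz[symmetric])
  have vw: "fvalid w" unfolding w_def using vu fvalid_replicate by blast
  define p where "p = take (length u + 1) w"
  define r where "r = drop (length u + 1) w"
  have wpr: "w = p @ r" unfolding p_def r_def by simp
  have lr: "length r = m" unfolding r_def w_def by simp
  have p0: "p = False # take (length u) (replicate m False @ u)" unfolding p_def w_def by simp
  have pne: "p \<noteq> []" using p0 by simp
  have rne: "r \<noteq> []" using lr m by auto
  have vp: "fvalid p" and vr: "fvalid r" using vw wpr fvalid_append by blast+
  define p0' where "p0' = take (length u) (replicate m False @ u)"
  have vp0: "fvalid p0'" using vp p0 unfolding p0'_def by (simp add: fvalid_Cons)
  have "fval p = fval p0'" using p0 unfolding p0'_def by simp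
  also have "... < fib (length p0' + 2)" using fval_bound[OF vp0] .
  finally have "fval p + 1 \<le> fib (length p + 1)" using p0 unfolding p0'_def by simp
  also have "... < fib (length p + 2)"
  proof -
    have "0 < fib (length p)" using pne by (simp add: fib_neq_0_nat)
    then show ?thesis by (simp add: numeral_eq_Suc)
  qed
  finally obtain p' where p': "fvalid p'" "length p' = length p" "fval p' = fval p + 1"
    using exists_rep[of "fval p + 1" "length p"] by auto
  have "Phi c w = Hf c (fib_thue (fval p), fib_thue (fval p'), last p, r)"
  proof
    fix v
    have val: "fvalid (p@(r@v)) = fvalid (r@v)"
      using vw wpr pne rne by (cases r) (auto simp: fvalid_append)
    show "Phi c w v = Hf c (fib_thue (fval p), fib_thue (fval p'), last p, r) v"
    proof (cases "fvalid (r@v)")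
      case False then show ?thesis using val wpr unfolding Phi_def Hf_def by simp
    next
      case True
      define K where "K = length (r@v)"
      have X: "fval (r@v) + c < fib (K+2) + fib K"
      proof -
        have "fval (r@v) < fib (K+2)" using fval_bound[OF True] unfolding K_def .
        moreover have "fib m \<le> fib K" unfolding K_def using lr by (simp add: fib_mono)
        ultimately show ?thesis using m by linarith
      qed
      have eq: "fval (p@(r@v)) + c = fval (p @ replicate K False) + (fval (r@v) + c)"
        using fval_app0[of p "r@v"] unfolding K_def by simp
      have "fib_thue (fval (p@(r@v)) + c) = core (fib_thue (fval p)) (fib_thue (fval p')) (last p) K (fval (r@v) + c)"
        by (subst eq) (rule core_lemma[OF vp pne p'(1) p'(2) p'(3) X])
      then show ?thesis using True val wpr unfolding Phi_def Hf_def K_def by simp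
    qed
  qed
  then show ?thesis using Pw thue_lt2 vr lr by auto
qed

lemma card_R: "card {r. fvalid r \<and> length r = m} \<le> fib (m+2)"
proof -
  let ?R = "{r. fvalid r \<and> length r = m}"
  have inj: "inj_on fval ?R"
  proof (rule inj_onI)
    fix x y assume "x \<in> ?R" "y \<in> ?R" "fval x = fval y"
    then show "x = y" using uniq_same_len[of x y] by simp
  qed
  have "fval ` ?R \<subseteq> {..<fib (m+2)}" using fval_bound by auto
  then have "card (fval ` ?R) \<le> fib (m+2)" by (metis card_lessThan card_mono finite_lessThan)
  then show ?thesis using card_image[OF inj] by simp
qed

lemma finite_R: "finite {r. fvalid r \<and> length r = m}"
proof -
  have "{r. fvalid r \<and> length r = m} \<subseteq> {xs. set xs \<subseteq> (UNIV::bool set) \<and> length xs = m}" by auto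
  then show ?thesis using finite_lists_length_eq[of "UNIV::bool set" m] finite_subset by auto
qed

theorem theorem14:
  shows "\<exists>K::nat. \<forall>c::nat. \<exists>n delta q0 (out :: nat \<Rightarrow> nat).
           fib_dfao_generates n delta q0 out (\<lambda>i. fib_thue (i + c)) \<and> n \<le> K * (c + 1)"
proof -
  have "\<forall>c::nat. \<exists>n delta q0 (out :: nat \<Rightarrow> nat).
           fib_dfao_generates n delta q0 out (\<lambda>i. fib_thue (i + c)) \<and> n \<le> 49 * (c + 1)"
  proof
  fix c :: nat
  obtain m where m: "m \<ge> 2" "c \<le> fib m" "fib (m+2) \<le> 6*(c+1)" using choose_m by blast
  define R where "R = {r. fvalid r \<and> length r = m}"
  define Dm where "Dm = {..<(2::nat)} \<times> {..<(2::nat)} \<times> (UNIV::bool set) \<times> R"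
  define S where "S = range (Phi c)"
  have sub: "S \<subseteq> insert (\<lambda>v. 0) (Hf c ` Dm)"
  proof
    fix f assume "f \<in> S"
    then obtain u where u: "f = Phi c u" unfolding S_def by blast
    show "f \<in> insert (\<lambda>v. 0) (Hf c ` Dm)"
    proof (cases "fvalid u")
      case True then show ?thesis using Phi_in[OF m(1) m(2) True] u unfolding Dm_def R_def by blast
    next
      case False
      then have "f = (\<lambda>v. 0)" unfolding u Phi_def by (auto simp: fvalid_append)
      then show ?thesis by blast
    qed
  qed
  have fR: "finite R" unfolding R_def by (rule finite_R)
  have fD: "finite Dm" unfolding Dm_def using fR by simp
  have cD: "card Dm = 2*2*2*card R" unfolding Dm_def by (simp add: card_cartesian_product)
  have cR: "card R \<le> fib (m+2)" unfolding R_def by (rule card_R)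
  have finS: "finite S" using sub fD finite_subset by blast
  have "card S \<le> card (insert (\<lambda>v. 0) (Hf c ` Dm))" using sub fD by (simp add: card_mono)
  also have "... \<le> Suc (card (Hf c ` Dm))" by (simp add: card_insert_le_m1 card_insert_if)
  also have "... \<le> Suc (card Dm)" using card_image_le[OF fD] by simp
  finally have cS0: "card S \<le> Suc (card Dm)" .
  have "card Dm \<le> 8 * fib (m+2)" using cD cR by simp
  moreover have "(6::nat)*(c+1) = 6*c+6" "(49::nat)*(c+1) = 49*c+49" by simp_all
  ultimately have cS: "card S \<le> 49 * (c+1)" using cS0 m(3) by linarith
  define n where "n = card S"
  obtain g where g: "bij_betw g {0..<n} S" using ex_bij_betw_nat_finite[OF finS] unfolding n_def by blast
  have npos: "0 < n" unfolding n_def using finS S_def by (simp add: card_gt_0_iff)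
  define ig where "ig = inv_into {0..<n} g"
  have gimg: "g ` {0..<n} = S" using g by (simp add: bij_betw_def)
  have ig_lt: "ig f < n" if "f \<in> S" for f
    using inv_into_into[of f g "{0..<n}"] that gimg unfolding ig_def by auto
  have g_ig: "g (ig f) = f" if "f \<in> S" for f
    using f_inv_into_f[of f g "{0..<n}"] that gimg unfolding ig_def by auto
  define delta where "delta = (\<lambda>q b. if q < n then ig (\<lambda>v. g q (b#v)) else 0)"
  define q0 where "q0 = ig (Phi c [])"
  define out where "out = (\<lambda>q. g q [])"
  have PhiS: "Phi c u \<in> S" for u unfolding S_def by blast
  have run: "dfao_run delta q0 w = ig (Phi c w)" for w
  proof (induction w rule: rev_induct)
    case Nil then show ?case by (simp add: dfao_run_def q0_def)
  next
    case (snoc b w)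
    have "dfao_run delta q0 (w@[b]) = delta (ig (Phi c w)) b"
      using snoc by (simp add: dfao_run_def)
    also have "... = ig (\<lambda>v. Phi c w (b#v))"
      unfolding delta_def using ig_lt[OF PhiS] g_ig[OF PhiS] by simp
    finally show ?case by (simp add: Phi_snoc)
  qed
  have wf: "dfao_wf n delta q0"
    unfolding dfao_wf_def
  proof (intro conjI allI impI)
    show "q0 < n" unfolding q0_def by (rule ig_lt[OF PhiS])
  next
    fix q b assume "q < n"
    then have "g q \<in> S" using gimg by auto
    then obtain u where "g q = Phi c u" unfolding S_def by blast
    then have "(\<lambda>v. g q (b#v)) = Phi c (u@[b])" by (simp add: Phi_snoc)
    then show "delta q b < n" unfolding delta_def using \<open>q < n\<close> ig_lt[OF PhiS] by simp
  qed
  have gen: "fib_dfao_generates n delta q0 out (\<lambda>i. fib_thue (i + c))"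
    unfolding fib_dfao_generates_def
  proof (intro conjI allI impI wf)
    fix w assume "fvalid w"
    then show "out (dfao_run delta q0 w) = fib_thue (fval w + c)"
      unfolding run out_def using g_ig[OF PhiS] by (simp add: Phi_def)
  qed
  show "\<exists>n delta q0 (out :: nat \<Rightarrow> nat).
           fib_dfao_generates n delta q0 out (\<lambda>i. fib_thue (i + c)) \<and> n \<le> 49 * (c + 1)"
    using gen cS unfolding n_def by blast
  qed
  then show ?thesis by blast
qed

end
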